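(* Let $F\colon[a,b]\to\mathbb{R}$ be continuous and suppose that $LD_1F(x)$ exists and is finite for all $x\in[a,b]$ outside a countable set. Then $LD_1F$ (defined arbitrarily on the exceptional countable set) is Laplace integrable on $[a,b]$ and $\int_a^xLD_1F=F(x)-F(a)$ for all $x\in[a,b]$.
   Context: Laplace derivative: for $F$ Perron integrable near $x$, $LD_1F(x)$ is the common value, when both exist and are equal, of $\lim_{s\to\infty}s^2\int_0^\delta e^{-st}[F(x+t)-F(x)]dt$ and $\lim_{s\to\infty}(-s^2)\int_0^\delta e^{-st}[F(x-t)-F(x)]dt$ for some $\delta>0$ (independent of $\delta$; one-sided at endpoints). Lower/upper Laplace derivates $\underline{LD}_1F,\overline{LD}_1F$ are defined with $\liminf$/$\limsup$ in place of $\lim$, taking the minimum (resp. maximum) over the two sides. Laplace integral: a major function of $f\colon[a,b]\to\mathbb{R}$ is a continuous $U$ with $\underline{LD}_1U\geqslant f$ and $\underline{LD}_1U>-\infty$ everywhere on $[a,b]$; a minor function is a continuous $V$ with $\overline{LD}_1V\leqslant f$ and $\overline{LD}_1V<\infty$ everywhere; $f$ is Laplace integrable if $\sup_V(V(b)-V(a))=\inf_U(U(b)-U(a))$ is finite, this value being $\int_a^bf$. *)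

theory Defs
  imports "HOL-Analysis.Analysis" "HOL-Library.Extended_Real"
begin

text \<open>Laplace transforms of the right and left increments of F at x, for the parameter s,
  over [0, d]. The integral is the Henstock-Kurzweil (= Perron) integral.\<close>

definition lap_right :: "(real \<Rightarrow> real) \<Rightarrow> real \<Rightarrow> real \<Rightarrow> real \<Rightarrow> real" where
  "lap_right F x d s = s\<^sup>2 * integral {0..d} (\<lambda>t. exp (- s * t) * (F (x + t) - F x))"

definition lap_left :: "(real \<Rightarrow> real) \<Rightarrow> real \<Rightarrow> real \<Rightarrow> real \<Rightarrow> real" where
  "lap_left F x d s = - (s\<^sup>2) * integral {0..d} (\<lambda>t. exp (- s * t) * (F (x - t) - F x))"

definition laplace_deriv :: "real \<Rightarrow> real \<Rightarrow> (real \<Rightarrow> real) \<Rightarrow> real \<Rightarrow> real \<Rightarrow> bool" where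
  "laplace_deriv a b F x L \<longleftrightarrow>
     (x < b \<longrightarrow> (\<exists>d. 0 < d \<and> x + d \<le> b \<and> (lap_right F x d \<longlongrightarrow> L) at_top)) \<and>
     (a < x \<longrightarrow> (\<exists>d. 0 < d \<and> a \<le> x - d \<and> (lap_left F x d \<longlongrightarrow> L) at_top))"

text \<open>Lower / upper Laplace derivates relative to [a,b]; the value does not depend on delta
  for continuous F, so the maximal admissible delta is used.\<close>

definition lower_LD :: "real \<Rightarrow> real \<Rightarrow> (real \<Rightarrow> real) \<Rightarrow> real \<Rightarrow> ereal" where
  "lower_LD a b F x =
     min (if x < b then Liminf at_top (\<lambda>s. ereal (lap_right F x (b - x) s)) else \<infinity>)
         (if a < x then Liminf at_top (\<lambda>s. ereal (lap_left F x (x - a) s)) else \<infinity>)"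

definition upper_LD :: "real \<Rightarrow> real \<Rightarrow> (real \<Rightarrow> real) \<Rightarrow> real \<Rightarrow> ereal" where
  "upper_LD a b F x =
     max (if x < b then Limsup at_top (\<lambda>s. ereal (lap_right F x (b - x) s)) else - \<infinity>)
         (if a < x then Limsup at_top (\<lambda>s. ereal (lap_left F x (x - a) s)) else - \<infinity>)"

definition laplace_major :: "(real \<Rightarrow> real) \<Rightarrow> real \<Rightarrow> real \<Rightarrow> (real \<Rightarrow> real) \<Rightarrow> bool" where
  "laplace_major f a b U \<longleftrightarrow> continuous_on {a..b} U \<and>
     (\<forall>x\<in>{a..b}. ereal (f x) \<le> lower_LD a b U x \<and> lower_LD a b U x > - \<infinity>)"

definition laplace_minor :: "(real \<Rightarrow> real) \<Rightarrow> real \<Rightarrow> real \<Rightarrow> (real \<Rightarrow> real) \<Rightarrow> bool" where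
  "laplace_minor f a b V \<longleftrightarrow> continuous_on {a..b} V \<and>
     (\<forall>x\<in>{a..b}. upper_LD a b V x \<le> ereal (f x) \<and> upper_LD a b V x < \<infinity>)"

definition laplace_has_integral :: "(real \<Rightarrow> real) \<Rightarrow> real \<Rightarrow> real \<Rightarrow> real \<Rightarrow> bool" where
  "laplace_has_integral f a b I \<longleftrightarrow>
     (SUP V\<in>{V. laplace_minor f a b V}. ereal (V b - V a)) = ereal I \<and>
     (INF U\<in>{U. laplace_major f a b U}. ereal (U b - U a)) = ereal I"

definition laplace_integrable :: "(real \<Rightarrow> real) \<Rightarrow> real \<Rightarrow> real \<Rightarrow> bool" where
  "laplace_integrable f a b \<longleftrightarrow> (\<exists>I. laplace_has_integral f a b I)"

end

theory Submission imports Defs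
begin

lemma lim_pow_exp:
  assumes d: "0 < (d::real)"
  shows "((\<lambda>s. (d * s) ^ k / exp (d * s)) \<longlongrightarrow> 0) at_top"
proof -
  have "filterlim (\<lambda>s. d * s) at_top at_top"
    by (rule filterlim_tendsto_pos_mult_at_top[OF tendsto_const d filterlim_ident])
  from filterlim_compose[OF tendsto_power_div_exp_0 this] show ?thesis .
qed

lemma lim_sq_exp:
  assumes d: "0 < (d::real)"
  shows "((\<lambda>s::real. s\<^sup>2 * exp (- s * d)) \<longlongrightarrow> 0) at_top"
proof -
  have "((\<lambda>s. (d * s) ^ 2 / exp (d * s) * (1 / d\<^sup>2)) \<longlongrightarrow> 0 * (1 / d\<^sup>2)) at_top"
    by (intro tendsto_mult lim_pow_exp d tendsto_const)
  moreover have "(d * s) ^ 2 / exp (d * s) * (1 / d\<^sup>2) = s\<^sup>2 * exp (- s * d)" for s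
    using d by (simp add: exp_minus field_simps power2_eq_square mult.commute)
  ultimately show ?thesis by simp
qed

lemma lim_id_exp:
  assumes D: "0 < (D::real)"
  shows "((\<lambda>s. 1 - exp (- s * D) * (1 + s * D)) \<longlongrightarrow> 1) at_top"
proof -
  have "((\<lambda>s. 1 - ((D * s) ^ 0 / exp (D * s) + (D * s) ^ 1 / exp (D * s))) \<longlongrightarrow> 1 - (0 + 0)) at_top"
    by (intro tendsto_diff tendsto_add lim_pow_exp D tendsto_const)
  moreover have "(\<lambda>s. 1 - ((D * s) ^ 0 / exp (D * s) + (D * s) ^ 1 / exp (D * s))) = (\<lambda>s. 1 - exp (- s * D) * (1 + s * D))"
    by (rule ext) (simp add: exp_minus field_simps mult.commute)
  ultimately show ?thesis by simp
qed

lemma cont_shift: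
  fixes G :: "real \<Rightarrow> real"
  assumes "continuous_on {x..x+d} G"
  shows "continuous_on {0..d} (\<lambda>t. G (x+t))"
proof -
  have "continuous_on {0..d} (\<lambda>t. x + t)" by (rule continuous_on_add[OF continuous_on_const continuous_on_id])
  from continuous_on_compose2[OF assms this] show ?thesis by auto
qed

lemma lap_int:
  fixes G :: "real \<Rightarrow> real"
  assumes "continuous_on {x..x+d} G"
  shows "(\<lambda>t. exp (- s * t) * (G (x + t) - G x)) integrable_on {0..d}"
proof -
  have "continuous_on {0..d} (\<lambda>t. exp (- s * t))" by (auto intro!: continuous_intros)
  moreover have "continuous_on {0..d} (\<lambda>t. G (x + t) - G x)"
    by (rule continuous_on_diff[OF cont_shift[OF assms] continuous_on_const])
  ultimately show ?thesis by (intro integrable_continuous_real continuous_on_mult)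
qed

lemma lap_right_add:
  assumes "continuous_on {x..x+d} G" "continuous_on {x..x+d} H"
  shows "lap_right (\<lambda>y. G y + H y) x d s = lap_right G x d s + lap_right H x d s"
proof -
  have "integral {0..d} (\<lambda>t. exp (- s * t) * (G (x + t) + H (x+t) - (G x + H x)))
     = integral {0..d} (\<lambda>t. exp (- s * t) * (G (x + t) - G x) + exp (- s * t) * (H (x + t) - H x))"
    by (simp add: algebra_simps)
  also have "\<dots> = integral {0..d} (\<lambda>t. exp (- s * t) * (G (x + t) - G x)) +
      integral {0..d} (\<lambda>t. exp (- s * t) * (H (x + t) - H x))"
    by (rule integral_add[OF lap_int[OF assms(1)] lap_int[OF assms(2)]])
  finally show ?thesis unfolding lap_right_def by (simp add: algebra_simps)
qed

lemma lap_right_cmul: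
  "lap_right (\<lambda>y. c * G y) x d s = c * lap_right G x d s"
proof -
  have eq: "(\<lambda>t. exp (- s * t) * (c * G (x + t) - c * G x))
     = (\<lambda>t. c *\<^sub>R (exp (- s * t) * (G (x + t) - G x)))"
    by (auto simp: fun_eq_iff algebra_simps)
  show ?thesis unfolding lap_right_def by (simp only: eq integral_cmul) simp
qed

lemma lap_right_neg:
  "lap_right (\<lambda>y. - G y) x d s = - lap_right G x d s"
  using lap_right_cmul[of "-1" G x d s] by simp

lemma lap_left_refl:
  "lap_left G x d s = lap_right (\<lambda>y. - G (- y)) (- x) d s"
proof -
  have "integral {0..d} (\<lambda>t. exp (- s * t) * (- G (x - t) - - G x))
     = integral {0..d} (\<lambda>t. - (exp (- s * t) * (G (x - t) - G x)))"
    by (simp add: algebra_simps)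
  then show ?thesis unfolding lap_right_def lap_left_def by simp
qed

lemma lap_right_mono_nonneg:
  assumes "continuous_on {x..x+d} G" "\<And>t. t \<in> {0..d} \<Longrightarrow> G x \<le> G (x+t)"
  shows "0 \<le> lap_right G x d s"
  unfolding lap_right_def
  by (intro mult_nonneg_nonneg integral_nonneg lap_int[OF assms(1)]) (auto simp: assms(2))

lemma lap_right_cong:
  assumes "\<And>y. y \<in> {x..x+d} \<Longrightarrow> G y = H y"  "0 \<le> d"
  shows "lap_right G x d s = lap_right H x d s"
  unfolding lap_right_def using assms
  by (intro arg_cong2[where f="(*)"] refl integral_cong) auto

lemma lap_right_le:
  assumes "continuous_on {x..x+d} G" "continuous_on {x..x+d} H"
    "\<And>t. t \<in> {0..d} \<Longrightarrow> G (x+t) - G x \<le> H (x+t) - H x"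
  shows "lap_right G x d s \<le> lap_right H x d s"
  unfolding lap_right_def
  by (intro mult_left_mono integral_le lap_int assms) (auto simp: assms)


lemma cont_bound:
  fixes G :: "real \<Rightarrow> real"
  assumes "continuous_on {x..x+D} G" "0 \<le> D"
  obtains M where "0 \<le> M" "\<And>t. t \<in> {0..D} \<Longrightarrow> \<bar>G (x+t) - G x\<bar> \<le> M"
proof -
  have c: "continuous_on {0..D} (\<lambda>t. \<bar>G (x+t) - G x\<bar>)"
    by (intro continuous_on_rabs continuous_on_diff cont_shift[OF assms(1)] continuous_on_const)
  obtain m where m: "m \<in> {0..D}" "\<And>y. y \<in> {0..D} \<Longrightarrow> \<bar>G (x+y) - G x\<bar> \<le> \<bar>G (x+m) - G x\<bar>"
    using continuous_attains_sup[OF compact_Icc _ c] assms(2) by auto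
  show ?thesis by (rule that[of "\<bar>G (x+m) - G x\<bar>"]) (auto intro: m)
qed

lemma lap_right_delta:
  fixes G :: "real \<Rightarrow> real"
  assumes cont: "continuous_on {x..x+D} G" and d: "0 < d" "d \<le> D"
  shows "((\<lambda>s. lap_right G x D s - lap_right G x d s) \<longlongrightarrow> 0) at_top"
proof -
  obtain M where M: "0 \<le> M" "\<And>t. t \<in> {0..D} \<Longrightarrow> \<bar>G (x+t) - G x\<bar> \<le> M"
    using cont_bound[OF cont] d by auto
  have "eventually (\<lambda>s. norm (lap_right G x D s - lap_right G x d s) \<le> s\<^sup>2 * exp (- s * d) * M * (D - d)) at_top"
    using eventually_ge_at_top[of "0::real"]
  proof eventually_elim
    case (elim s)
    define g where "g = (\<lambda>t. exp (- s * t) * (G (x + t) - G x))"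
    have gi: "g integrable_on {0..D}" unfolding g_def by (rule lap_int[OF cont])
    have gc: "continuous_on {0..D} g" unfolding g_def
      by (intro continuous_on_mult continuous_on_diff cont_shift[OF cont] continuous_on_const)
         (auto intro!: continuous_intros)
    have comb: "integral {0..d} g + integral {d..D} g = integral {0..D} g"
      by (rule Henstock_Kurzweil_Integration.integral_combine) (use d gi in auto)
    have "norm (integral {d..D} g) \<le> (exp (- s * d) * M) * (D - d)"
    proof (rule integral_bound)
      show "continuous_on {d..D} g" using gc by (rule continuous_on_subset) (use d in auto)
      fix t assume t: "t \<in> {d..D}"
      have "norm (g t) = exp (- s * t) * \<bar>G (x + t) - G x\<bar>" by (simp add: g_def abs_mult)
      also have "\<dots> \<le> exp (- s * d) * M"
        by (intro mult_mono M(2)) (use t d elim M in \<open>auto intro: mult_left_mono\<close>)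
      finally show "norm (g t) \<le> exp (- s * d) * M" .
    qed (use d in auto)
    then have "norm (s\<^sup>2 * integral {d..D} g) \<le> s\<^sup>2 * (exp (- s * d) * M * (D - d))"
      by (simp add: abs_mult mult_left_mono)
    moreover have "lap_right G x D s - lap_right G x d s = s\<^sup>2 * integral {d..D} g"
      unfolding lap_right_def g_def[symmetric] using comb[symmetric] by (simp add: algebra_simps)
    ultimately show ?case by (simp add: algebra_simps)
  qed
  moreover have "((\<lambda>s. s\<^sup>2 * exp (- s * d) * M * (D - d)) \<longlongrightarrow> 0) at_top"
  proof -
    have "((\<lambda>s::real. s\<^sup>2 * exp (- s * d)) \<longlongrightarrow> 0) at_top" by (rule lim_sq_exp[OF d(1)])
    then have "((\<lambda>s::real. s\<^sup>2 * exp (- s * d) * (M * (D - d))) \<longlongrightarrow> 0 * (M * (D - d))) at_top"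
      by (intro tendsto_mult tendsto_const)
    then show ?thesis by (simp add: mult.assoc)
  qed
  ultimately show ?thesis by (rule Lim_null_comparison)
qed

lemma lap_right_id:
  assumes D: "0 < D"
  shows "((\<lambda>s. lap_right (\<lambda>y. y) x D s) \<longlongrightarrow> 1) at_top"
proof -
  have "eventually (\<lambda>s. 1 - exp (- s * D) * (1 + s * D) = lap_right (\<lambda>y. y) x D s) at_top"
    using eventually_gt_at_top[of "0::real"]
  proof eventually_elim
    case (elim s)
    let ?P = "\<lambda>t. - (t / s + 1 / s\<^sup>2) * exp (- s * t)"
    have "((\<lambda>t. exp (- s * t) * t) has_integral (?P D - ?P 0)) {0..D}"
    proof (rule fundamental_theorem_of_calculus)
      fix t assume "t \<in> {0..D}"
      have "(?P has_real_derivative (exp (- s * t) * t)) (at t)"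
        using elim by (auto intro!: derivative_eq_intros simp: field_simps power2_eq_square)
      then have "(?P has_real_derivative (exp (- s * t) * t)) (at t within {0..D})"
        by (rule has_field_derivative_at_within)
      then show "(?P has_vector_derivative (exp (- s * t) * t)) (at t within {0..D})"
        by (simp add: has_real_derivative_iff_has_vector_derivative)
    qed (use D in auto)
    then have "integral {0..D} (\<lambda>t. exp (- s * t) * t) = ?P D - ?P 0" by (rule integral_unique)
    then show ?case unfolding lap_right_def using elim
      by (simp add: field_simps power2_eq_square)
  qed
  moreover have "((\<lambda>s. 1 - exp (- s * D) * (1 + s * D)) \<longlongrightarrow> 1) at_top"
    by (rule lim_id_exp[OF D])
  ultimately show ?thesis by (rule Lim_transform_eventually[rotated])
qed

lemma lap_right_const: "lap_right (\<lambda>y. c) x d s = 0"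
  unfolding lap_right_def by simp

lemma key_lemma:
  fixes G :: "real \<Rightarrow> real"
  assumes ab: "a < b" and cont: "continuous_on {a..b} G"
    and pos: "\<And>x. x \<in> {a..<b} \<Longrightarrow> \<exists>s. lap_right G x (b - x) s > 0"
  shows "G a \<le> G b"
proof -
  obtain m where m: "m \<in> {a..b}" "\<And>y. y \<in> {a..b} \<Longrightarrow> G y \<le> G m"
    using continuous_attains_sup[OF compact_Icc _ cont] ab by auto
  show ?thesis
  proof (cases "m = b")
    case True then show ?thesis using m ab by auto
  next
    case False
    then have mb: "m \<in> {a..<b}" using m by auto
    obtain s where s: "lap_right G m (b - m) s > 0" using pos[OF mb] by auto
    have c2: "continuous_on {m..m + (b - m)} G"
      using cont by (rule continuous_on_subset) (use m in auto)
    have "lap_right G m (b - m) s \<le> lap_right (\<lambda>y. G m) m (b - m) s"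
      by (rule lap_right_le[OF c2 continuous_on_const]) (use m mb in auto)
    with s show ?thesis by (simp add: lap_right_const)
  qed
qed


lemma major_right:
  assumes "laplace_major f a b U" "x \<in> {a..<b}"
  shows "ereal (f x) \<le> Liminf at_top (\<lambda>s. ereal (lap_right U x (b - x) s))"
  using assms unfolding laplace_major_def lower_LD_def
  by (auto dest!: bspec[of _ _ x] intro: order.trans min.cobounded1)

lemma major_left:
  assumes "laplace_major f a b U" "x \<in> {a<..b}"
  shows "ereal (f x) \<le> Liminf at_top (\<lambda>s. ereal (lap_left U x (x - a) s))"
  using assms unfolding laplace_major_def lower_LD_def
  by (auto dest!: bspec[of _ _ x] intro: order.trans min.cobounded2)

lemma minor_right:
  assumes "laplace_minor f a b V" "x \<in> {a..<b}"
  shows "Limsup at_top (\<lambda>s. ereal (lap_right V x (b - x) s)) \<le> ereal (f x)"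
  using assms unfolding laplace_minor_def upper_LD_def
  by (auto dest!: bspec[of _ _ x] intro: order.trans[rotated] max.cobounded1)

lemma major_minor:
  assumes ab: "a < b" and U: "laplace_major f a b U" and V: "laplace_minor f a b V"
  shows "V b - V a \<le> U b - U a"
proof -
  have cU: "continuous_on {a..b} U" and cV: "continuous_on {a..b} V"
    using U V unfolding laplace_major_def laplace_minor_def by auto
  have main: "U a - V a + \<eta> * a \<le> U b - V b + \<eta> * b" if eta: "\<eta> > 0" for \<eta>
  proof -
    let ?G = "\<lambda>y. U y - V y + \<eta> * y"
    have "?G a \<le> ?G b"
    proof (rule key_lemma[OF ab])
      show "continuous_on {a..b} ?G" by (intro continuous_intros cU cV)
      fix x assume x: "x \<in> {a..<b}"
      have cU': "continuous_on {x..x + (b - x)} U" using cU by (rule continuous_on_subset) (use x in auto)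
      have cV': "continuous_on {x..x + (b - x)} V" using cV by (rule continuous_on_subset) (use x in auto)
      have cnV: "continuous_on {x..x + (b - x)} (\<lambda>y. - V y)" by (intro continuous_intros cV')
      have cUV: "continuous_on {x..x + (b - x)} (\<lambda>y. U y + - V y)" by (intro continuous_intros cV' cU')
      have cid: "continuous_on {x..x + (b - x)} (\<lambda>y. \<eta> * y)" by (intro continuous_intros)
      have eq: "lap_right ?G x (b - x) s = lap_right U x (b - x) s - lap_right V x (b - x) s
                 + \<eta> * lap_right (\<lambda>y. y) x (b - x) s" for s
      proof -
        have "lap_right ?G x (b - x) s = lap_right (\<lambda>y. (U y + - V y) + \<eta> * y) x (b - x) s" by simp
        also have "\<dots> = lap_right (\<lambda>y. U y + - V y) x (b - x) s + lap_right (\<lambda>y. \<eta> * y) x (b - x) s"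
          by (rule lap_right_add[OF cUV cid])
        also have "\<dots> = lap_right U x (b - x) s + lap_right (\<lambda>y. - V y) x (b - x) s + \<eta> * lap_right (\<lambda>y. y) x (b - x) s"
          using lap_right_add[OF cU' cnV, of s] by (simp add: lap_right_cmul)
        finally show ?thesis by (simp add: lap_right_neg)
      qed
      have e1: "eventually (\<lambda>s. ereal (f x - \<eta>/4) < ereal (lap_right U x (b - x) s)) at_top"
        using major_right[OF U x, unfolded le_Liminf_iff, rule_format, of "ereal (f x - \<eta>/4)"] eta by simp
      have e2: "eventually (\<lambda>s. ereal (lap_right V x (b - x) s) < ereal (f x + \<eta>/4)) at_top"
        using minor_right[OF V x, unfolded Limsup_le_iff, rule_format, of "ereal (f x + \<eta>/4)"] eta by simp
      have e3: "eventually (\<lambda>s. 1/2 < lap_right (\<lambda>y. y) x (b - x) s) at_top"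
        by (rule order_tendstoD(1)[OF lap_right_id]) (use x in auto)
      have "eventually (\<lambda>s. 0 < lap_right ?G x (b - x) s) at_top"
        using e1 e2 e3
      proof eventually_elim
        case (elim s)
        then have "\<eta> * (1/2) < \<eta> * lap_right (\<lambda>y. y) x (b - x) s" using eta by simp
        with elim show ?case unfolding eq by simp
      qed
      then show "\<exists>s. 0 < lap_right ?G x (b - x) s"
        by (auto simp: eventually_at_top_linorder)
    qed
    then show ?thesis by simp
  qed
  show ?thesis
  proof (rule field_le_epsilon)
    fix e :: real assume e: "e > 0"
    have "U a - V a + (e / (b - a)) * a \<le> U b - V b + (e / (b - a)) * b"
      by (rule main) (use e ab in auto)
    moreover have "(e / (b - a)) * b - (e / (b - a)) * a = (e / (b - a)) * (b - a)" by (simp add: right_diff_distrib)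
    ultimately have "V b - V a \<le> U b - U a + (e / (b - a)) * (b - a)" by linarith
    then show "V b - V a \<le> U b - U a + e" using ab by simp
  qed
qed


definition W :: "(real \<Rightarrow> real) \<Rightarrow> real \<Rightarrow> real" where
  "W g r = Sup (g ` {-r..r})"

lemma W_bdd:
  fixes g :: "real \<Rightarrow> real"
  assumes "continuous_on UNIV g"
  shows "bdd_above (g ` {-r..r})"
proof -
  have "compact (g ` {-r..r})"
    using continuous_on_subset[OF assms, of "{-r..r}"] by (intro compact_continuous_image compact_Icc) simp
  then show ?thesis by (intro bounded_imp_bdd_above compact_imp_bounded)
qed

lemma W_upper:
  fixes g :: "real \<Rightarrow> real"
  assumes "continuous_on UNIV g" "\<bar>u\<bar> \<le> r"
  shows "g u \<le> W g r"
  unfolding W_def by (rule cSup_upper[OF _ W_bdd[OF assms(1)]], rule imageI) (use assms(2) in \<open>auto simp: abs_le_iff\<close>)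

lemma W_least:
  fixes g :: "real \<Rightarrow> real"
  assumes "0 \<le> r" "\<And>u. \<bar>u\<bar> \<le> r \<Longrightarrow> g u \<le> M"
  shows "W g r \<le> M"
  unfolding W_def by (rule cSup_least) (use assms in auto)

lemma W_mono:
  fixes g :: "real \<Rightarrow> real"
  assumes "continuous_on UNIV g" "0 \<le> r" "r \<le> r'"
  shows "W g r \<le> W g r'"
  unfolding W_def by (rule cSup_subset_mono[OF _ W_bdd[OF assms(1)]]) (use assms in auto)

lemma W_zero:
  "W g 0 = g 0"
  unfolding W_def by simp

lemma W_cont:
  fixes g :: "real \<Rightarrow> real"
  assumes cont: "continuous_on UNIV g"
  shows "continuous_on UNIV (\<lambda>t. W g \<bar>t\<bar>)"
proof (rule continuous_at_imp_continuous_on, intro ballI)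
  fix t0 :: real
  show "isCont (\<lambda>t. W g \<bar>t\<bar>) t0"
    unfolding continuous_at_eps_delta
  proof (intro allI impI)
    fix \<epsilon> :: real assume \<epsilon>: "\<epsilon> > 0"
    define T where "T = \<bar>t0\<bar> + 1"
    have "uniformly_continuous_on {-T..T} g"
      by (rule compact_uniformly_continuous[OF continuous_on_subset[OF cont] compact_Icc]) auto
    then obtain \<delta> where \<delta>: "\<delta> > 0"
      "\<And>x x'. x \<in> {-T..T} \<Longrightarrow> x' \<in> {-T..T} \<Longrightarrow> dist x' x < \<delta> \<Longrightarrow> dist (g x') (g x) < \<epsilon>/2"
      unfolding uniformly_continuous_on_def using \<epsilon> by (metis half_gt_zero)
    have claim: "W g r' \<le> W g r + \<epsilon>/2" if r: "0 \<le> r" "r \<le> r'" "r' \<le> T" "r' - r < \<delta>" for r r'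
    proof (rule W_least)
      show "0 \<le> r'" using r by simp
      fix u :: real assume u: "\<bar>u\<bar> \<le> r'"
      define u' where "u' = max (-r) (min r u)"
      have u'r: "\<bar>u'\<bar> \<le> r" unfolding u'_def using r by auto
      have "\<bar>u - u'\<bar> \<le> r' - r" unfolding u'_def using u r by auto
      then have "dist u u' < \<delta>" using r by (simp add: dist_real_def)
      then have "dist (g u) (g u') < \<epsilon>/2"
        by (intro \<delta>(2)) (use u u'r r in auto)
      then have "g u \<le> g u' + \<epsilon>/2" unfolding dist_real_def by linarith
      also have "g u' \<le> W g r" by (rule W_upper[OF cont u'r])
      finally show "g u \<le> W g r + \<epsilon>/2" by simp
    qed
    show "\<exists>d>0. \<forall>t. dist t t0 < d \<longrightarrow> dist (W g \<bar>t\<bar>) (W g \<bar>t0\<bar>) < \<epsilon>"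
    proof (intro exI[of _ "min \<delta> 1"] conjI allI impI)
      show "0 < min \<delta> 1" using \<delta> by simp
      fix t assume "dist t t0 < min \<delta> 1"
      then have tt: "\<bar>t - t0\<bar> < \<delta>" "\<bar>t - t0\<bar> < 1" by (auto simp: dist_real_def)
      show "dist (W g \<bar>t\<bar>) (W g \<bar>t0\<bar>) < \<epsilon>"
      proof (cases "\<bar>t\<bar> \<le> \<bar>t0\<bar>")
        case True
        have "W g \<bar>t0\<bar> \<le> W g \<bar>t\<bar> + \<epsilon>/2" by (rule claim) (use True tt in \<open>auto simp: T_def\<close>)
        moreover have "W g \<bar>t\<bar> \<le> W g \<bar>t0\<bar>" by (rule W_mono[OF cont]) (use True in auto)
        ultimately show ?thesis using \<epsilon> by (simp add: dist_real_def)
      next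
        case False
        have "W g \<bar>t\<bar> \<le> W g \<bar>t0\<bar> + \<epsilon>/2" by (rule claim) (use False tt in \<open>auto simp: T_def\<close>)
        moreover have "W g \<bar>t0\<bar> \<le> W g \<bar>t\<bar>" by (rule W_mono[OF cont]) (use False in auto)
        ultimately show ?thesis using \<epsilon> by (simp add: dist_real_def)
      qed
    qed
  qed
qed


lemma bump:
  fixes F :: "real \<Rightarrow> real"
  assumes cont: "continuous_on UNIV F" and w: "w > 0"
  obtains \<phi> where "continuous_on UNIV \<phi>" "mono \<phi>" "\<And>x. \<bar>\<phi> x\<bar> \<le> w"
    "\<exists>\<tau>>0. \<forall>t\<in>{0..\<tau>}. \<bar>F (c+t) - F c\<bar> + sqrt t \<le> \<phi> (c+t) - \<phi> c \<and>
                        \<bar>F (c-t) - F c\<bar> + sqrt t \<le> \<phi> c - \<phi> (c-t)"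
proof -
  define g where "g = (\<lambda>u. \<bar>F (c+u) - F c\<bar>)"
  have gc: "continuous_on UNIV g" unfolding g_def
    by (intro continuous_on_rabs continuous_on_diff continuous_on_const
        continuous_on_compose2[OF cont, of _ "\<lambda>u. c + u"]) (auto intro!: continuous_intros)
  define h where "h = (\<lambda>t. W g \<bar>t\<bar> + sqrt \<bar>t\<bar>)"
  define \<psi> where "\<psi> = (\<lambda>t. min w (h t))"
  define \<phi> where "\<phi> = (\<lambda>x. \<psi> (max (x - c) 0) - \<psi> (max (c - x) 0))"
  have hc: "continuous_on UNIV h" unfolding h_def
    by (intro continuous_on_add W_cont[OF gc]) (auto intro!: continuous_intros)
  have \<psi>c: "continuous_on UNIV \<psi>" unfolding \<psi>_def by (intro continuous_intros hc)
  have g0: "g 0 = 0" by (simp add: g_def)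
  have Wnn: "0 \<le> W g \<bar>t\<bar>" for t using W_upper[OF gc, of 0 "\<bar>t\<bar>"] g0 by simp
  have h0: "h 0 = 0" by (simp add: h_def W_zero g0)
  have \<psi>0: "\<psi> 0 = 0" using w by (simp add: \<psi>_def h0)
  have \<psi>nn: "0 \<le> \<psi> t" for t unfolding \<psi>_def h_def using Wnn[of t] w by simp
  have \<psi>le: "\<psi> t \<le> w" for t unfolding \<psi>_def by simp
  have \<psi>mono: "\<psi> r \<le> \<psi> r'" if "0 \<le> r" "r \<le> r'" for r r'
  proof -
    have "W g \<bar>r\<bar> \<le> W g \<bar>r'\<bar>" using W_mono[OF gc, of r r'] that by simp
    moreover have "sqrt \<bar>r\<bar> \<le> sqrt \<bar>r'\<bar>" using that by simp
    ultimately have "h r \<le> h r'" unfolding h_def by (rule add_mono)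
    then show ?thesis unfolding \<psi>_def by simp
  qed
  show ?thesis
  proof (rule that[of \<phi>])
    show "continuous_on UNIV \<phi>" unfolding \<phi>_def
      by (intro continuous_on_diff continuous_on_compose2[OF \<psi>c]) (auto intro!: continuous_intros)
    show "mono \<phi>"
    proof (rule monoI)
      fix x y :: real assume "x \<le> y"
      then have "\<psi> (max (x - c) 0) \<le> \<psi> (max (y - c) 0)" "\<psi> (max (c - y) 0) \<le> \<psi> (max (c - x) 0)"
        by (auto intro!: \<psi>mono)
      then show "\<phi> x \<le> \<phi> y" unfolding \<phi>_def by simp
    qed
    show "\<bar>\<phi> x\<bar> \<le> w" for x
      unfolding \<phi>_def using \<psi>nn[of "max (x - c) 0"] \<psi>nn[of "max (c - x) 0"]
        \<psi>le[of "max (x - c) 0"] \<psi>le[of "max (c - x) 0"] by linarith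
    have "isCont h 0" using hc by (simp add: continuous_on_eq_continuous_at)
    then obtain d where d: "d > 0" "\<And>t. dist t 0 < d \<Longrightarrow> dist (h t) (h 0) < w"
      unfolding continuous_at_eps_delta using w by blast
    show "\<exists>\<tau>>0. \<forall>t\<in>{0..\<tau>}. \<bar>F (c+t) - F c\<bar> + sqrt t \<le> \<phi> (c+t) - \<phi> c \<and>
                        \<bar>F (c-t) - F c\<bar> + sqrt t \<le> \<phi> c - \<phi> (c-t)"
    proof (intro exI[of _ "d/2"] conjI ballI)
      show "0 < d/2" using d by simp
      fix t assume t: "t \<in> {0..d/2}"
      have "dist (h t) (h 0) < w" by (rule d(2)) (use t d in \<open>auto simp: dist_real_def\<close>)
      then have "h t < w" using h0 by (simp add: dist_real_def)
      then have \<psi>t: "\<psi> t = W g t + sqrt t" using t by (simp add: \<psi>_def h_def)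
      have \<phi>c: "\<phi> c = 0" by (simp add: \<phi>_def \<psi>0)
      have \<phi>1: "\<phi> (c+t) = \<psi> t" using t by (simp add: \<phi>_def \<psi>0)
      have \<phi>2: "\<phi> (c-t) = - \<psi> t" using t by (simp add: \<phi>_def \<psi>0)
      have "g t \<le> W g t" by (rule W_upper[OF gc]) (use t in auto)
      moreover have "g (-t) \<le> W g t" by (rule W_upper[OF gc]) (use t in auto)
      ultimately show "\<bar>F (c+t) - F c\<bar> + sqrt t \<le> \<phi> (c+t) - \<phi> c"
        "\<bar>F (c-t) - F c\<bar> + sqrt t \<le> \<phi> c - \<phi> (c-t)"
        unfolding \<phi>c \<phi>1 \<phi>2 \<psi>t by (auto simp: g_def)
    qed
  qed
qed


definition dom_at :: "(real \<Rightarrow> real) \<Rightarrow> (real \<Rightarrow> real) \<Rightarrow> real \<Rightarrow> bool" where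
  "dom_at F \<phi> c \<longleftrightarrow> (\<exists>\<tau>>0. \<forall>t\<in>{0..\<tau>}. \<bar>F (c+t) - F c\<bar> + sqrt t \<le> \<phi> (c+t) - \<phi> c \<and>
                        \<bar>F (c-t) - F c\<bar> + sqrt t \<le> \<phi> c - \<phi> (c-t))"

lemma Phi_exists:
  fixes F :: "real \<Rightarrow> real"
  assumes cont: "continuous_on UNIV F" and S: "countable S" and e: "\<epsilon> > 0"
  obtains \<Phi> where "continuous_on UNIV \<Phi>" "mono \<Phi>" "\<And>x y. \<Phi> y - \<Phi> x \<le> \<epsilon>"
    "\<And>c. c \<in> S \<Longrightarrow> dom_at F \<Phi> c"
proof (cases "S = {}")
  case True
  show ?thesis by (rule that[of "\<lambda>x. 0"]) (use True e in \<open>auto simp: mono_def\<close>)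
next
  case False
  define c where "c = from_nat_into S"
  have rc: "range c = S" unfolding c_def using False S by simp
  define w :: "nat \<Rightarrow> real" where "w n = \<epsilon>/4 * (1/2)^n" for n
  have wpos: "w n > 0" for n using e by (simp add: w_def)
  have wsums: "(\<lambda>n. 2 * w n) sums \<epsilon>"
  proof -
    have "(\<lambda>n. (1/2::real)^n) sums (1 / (1 - 1/2))" by (rule geometric_sums) simp
    then have "(\<lambda>n. (\<epsilon>/2) * (1/2::real)^n) sums ((\<epsilon>/2) * (1 / (1 - 1/2)))" by (rule sums_mult)
    then show ?thesis by (simp add: w_def)
  qed
  have wsum: "summable w"
    using summable_mult[OF sums_summable[OF wsums], of "1/2"] by simp
  have "\<exists>\<phi>. continuous_on UNIV \<phi> \<and> mono \<phi> \<and> (\<forall>x. \<bar>\<phi> x\<bar> \<le> w n) \<and> dom_at F \<phi> (c n)" for n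
  proof -
    obtain \<phi> where "continuous_on UNIV \<phi>" "mono \<phi>" "\<And>x. \<bar>\<phi> x\<bar> \<le> w n"
      "\<exists>\<tau>>0. \<forall>t\<in>{0..\<tau>}. \<bar>F (c n+t) - F (c n)\<bar> + sqrt t \<le> \<phi> (c n+t) - \<phi> (c n) \<and>
                        \<bar>F (c n-t) - F (c n)\<bar> + sqrt t \<le> \<phi> (c n) - \<phi> (c n-t)"
      using bump[OF cont wpos[of n], where c="c n"] by blast
    then show ?thesis unfolding dom_at_def by blast
  qed
  then obtain \<phi> where \<phi>: "\<And>n. continuous_on UNIV (\<phi> n)" "\<And>n. mono (\<phi> n)"
    "\<And>n x. \<bar>\<phi> n x\<bar> \<le> w n" "\<And>n. dom_at F (\<phi> n) (c n)"
    by metis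
  define \<Phi> where "\<Phi> x = (\<Sum>n. \<phi> n x)" for x
  have sm: "summable (\<lambda>n. \<phi> n x)" for x
    by (rule summable_comparison_test'[OF wsum]) (use \<phi>(3) in auto)
  have dif: "\<Phi> y - \<Phi> x = (\<Sum>n. \<phi> n y - \<phi> n x)" for x y
    unfolding \<Phi>_def by (rule suminf_diff[OF sm sm])
  have smd: "summable (\<lambda>n. \<phi> n y - \<phi> n x)" for x y
    by (rule summable_diff[OF sm sm])
  show ?thesis
  proof (rule that[of \<Phi>])
    have "uniform_limit UNIV (\<lambda>n x. \<Sum>i<n. \<phi> i x) (\<lambda>x. suminf (\<lambda>i. \<phi> i x)) sequentially"
      by (rule Weierstrass_m_test[OF _ wsum]) (use \<phi>(3) in auto)
    moreover have "continuous_on UNIV (\<lambda>x. \<Sum>i<n. \<phi> i x)" for n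
      by (rule continuous_on_sum) (rule \<phi>(1))
    ultimately show "continuous_on UNIV \<Phi>" unfolding \<Phi>_def
      using uniform_limit_theorem[OF always_eventually, of UNIV "\<lambda>n x. \<Sum>i<n. \<phi> i x"] by simp
    show "mono \<Phi>"
    proof (rule monoI)
      fix x y :: real assume xy: "x \<le> y"
      have "0 \<le> (\<Sum>n. \<phi> n y - \<phi> n x)"
        by (rule suminf_nonneg[OF smd]) (use \<phi>(2) xy in \<open>auto simp: mono_def\<close>)
      then show "\<Phi> x \<le> \<Phi> y" using dif[of y x] by simp
    qed
    show "\<Phi> y - \<Phi> x \<le> \<epsilon>" for x y
    proof -
      have "(\<Sum>n. \<phi> n y - \<phi> n x) \<le> (\<Sum>n. 2 * w n)"
      proof (rule suminf_le[OF _ smd sums_summable[OF wsums]])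
        fix n show "\<phi> n y - \<phi> n x \<le> 2 * w n" using \<phi>(3)[of n x] \<phi>(3)[of n y] by linarith
      qed
      then show ?thesis using dif[of y x] sums_unique[OF wsums] by simp
    qed
    fix c0 assume "c0 \<in> S"
    then obtain n where n: "c0 = c n" using rc by auto
    have ge: "\<phi> n y - \<phi> n x \<le> \<Phi> y - \<Phi> x" if "x \<le> y" for x y
    proof -
      have "sum (\<lambda>m. \<phi> m y - \<phi> m x) {n} \<le> (\<Sum>m. \<phi> m y - \<phi> m x)"
        by (rule sum_le_suminf[OF smd]) (use \<phi>(2) that in \<open>auto simp: mono_def\<close>)
      then show ?thesis using dif[of y x] by simp
    qed
    from \<phi>(4)[of n] show "dom_at F \<Phi> c0" unfolding dom_at_def n
    proof (elim exE conjE, intro exI conjI ballI)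
      fix \<tau> assume \<tau>: "\<tau> > 0" and H: "\<forall>t\<in>{0..\<tau>}. \<bar>F (c n + t) - F (c n)\<bar> + sqrt t \<le> \<phi> n (c n + t) - \<phi> n (c n) \<and>
          \<bar>F (c n - t) - F (c n)\<bar> + sqrt t \<le> \<phi> n (c n) - \<phi> n (c n - t)"
      show "\<tau> > 0" by fact
      fix t assume t: "t \<in> {0..\<tau>}"
      show "\<bar>F (c n + t) - F (c n)\<bar> + sqrt t \<le> \<Phi> (c n + t) - \<Phi> (c n)"
        using H t ge[of "c n" "c n + t"] by force
      show "\<bar>F (c n - t) - F (c n)\<bar> + sqrt t \<le> \<Phi> (c n) - \<Phi> (c n - t)"
        using H t ge[of "c n - t" "c n"] by force
    qed
  qed
qed


lemma right_regular:
  fixes F \<Phi> :: "real \<Rightarrow> real"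
  assumes cF: "continuous_on UNIV F" and cP: "continuous_on UNIV \<Phi>" and mP: "mono \<Phi>"
    and d: "0 < d" "d \<le> D" and lim: "(lap_right F x d \<longlongrightarrow> L) at_top"
  shows "ereal L \<le> Liminf at_top (\<lambda>s. ereal (lap_right (\<lambda>y. F y + \<Phi> y) x D s))"
proof -
  have cF': "continuous_on {x..x+D} F" by (rule continuous_on_subset[OF cF]) auto
  have cP': "continuous_on {x..x+D} \<Phi>" by (rule continuous_on_subset[OF cP]) auto
  have "((\<lambda>s. (lap_right F x D s - lap_right F x d s) + lap_right F x d s) \<longlongrightarrow> 0 + L) at_top"
    by (intro tendsto_add lim lap_right_delta[OF cF' d])
  then have limD: "(lap_right F x D \<longlongrightarrow> L) at_top" by simp
  have "Liminf at_top (\<lambda>s. ereal (lap_right F x D s)) = ereal L"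
    by (rule lim_imp_Liminf) (auto intro: limD)
  moreover have "Liminf at_top (\<lambda>s. ereal (lap_right F x D s)) \<le> Liminf at_top (\<lambda>s. ereal (lap_right (\<lambda>y. F y + \<Phi> y) x D s))"
  proof (rule Liminf_mono, rule always_eventually, rule allI)
    fix s
    have "0 \<le> lap_right \<Phi> x D s"
      by (rule lap_right_mono_nonneg[OF cP']) (use mP in \<open>auto simp: mono_def\<close>)
    then show "ereal (lap_right F x D s) \<le> ereal (lap_right (\<lambda>y. F y + \<Phi> y) x D s)"
      by (simp add: lap_right_add[OF cF' cP'])
  qed
  ultimately show ?thesis by simp
qed

lemma right_dom:
  fixes F \<Phi> :: "real \<Rightarrow> real"
  assumes cF: "continuous_on UNIV F" and cP: "continuous_on UNIV \<Phi>"
    and dom: "dom_at F \<Phi> x" and D: "0 < D"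
  shows "Liminf at_top (\<lambda>s. ereal (lap_right (\<lambda>y. F y + \<Phi> y) x D s)) = \<infinity>"
proof -
  let ?H = "\<lambda>y. F y + \<Phi> y"
  have cH: "continuous_on UNIV ?H" by (intro continuous_intros cF cP)
  obtain \<tau> where \<tau>: "\<tau> > 0" "\<And>t. t \<in> {0..\<tau>} \<Longrightarrow> \<bar>F (x+t) - F x\<bar> + sqrt t \<le> \<Phi> (x+t) - \<Phi> x"
    using dom unfolding dom_at_def by blast
  have Hs: "sqrt t \<le> ?H (x+t) - ?H x" if "t \<in> {0..\<tau>}" for t
    using \<tau>(2)[OF that] by linarith
  have "filterlim (lap_right ?H x D) at_top at_top"
  proof (subst filterlim_at_top, intro allI)
    fix Z :: real
    define K where "K = 2 * \<bar>Z\<bar> + 2"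
    have K: "K > 0" unfolding K_def by simp
    define \<tau>' where "\<tau>' = min (min \<tau> D) (1 / K^2)"
    have \<tau>': "\<tau>' > 0" "\<tau>' \<le> D" "\<tau>' \<le> \<tau>" "\<tau>' \<le> 1 / K^2" using \<tau> D K by (auto simp: \<tau>'_def)
    have cH1: "continuous_on {x..x+\<tau>'} ?H" by (rule continuous_on_subset[OF cH]) auto
    have cHD: "continuous_on {x..x+D} ?H" by (rule continuous_on_subset[OF cH]) auto
    have cK: "continuous_on {x..x+\<tau>'} (\<lambda>y. K * y)" by (intro continuous_intros)
    have le: "K * lap_right (\<lambda>y. y) x \<tau>' s \<le> lap_right ?H x \<tau>' s" for s
    proof -
      have "lap_right (\<lambda>y. K * y) x \<tau>' s \<le> lap_right ?H x \<tau>' s"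
      proof (rule lap_right_le[OF cK cH1])
        fix t assume t: "t \<in> {0..\<tau>'}"
        have "sqrt t \<le> sqrt (1 / K^2)" using t \<tau>' by auto
        also have "\<dots> = 1 / K" using K by (simp add: real_sqrt_divide)
        finally have st: "sqrt t \<le> 1 / K" .
        have "K * t = K * (sqrt t * sqrt t)" using t by simp
        also have "\<dots> \<le> K * ((1 / K) * sqrt t)"
          using st t K by (intro mult_left_mono mult_right_mono) auto
        also have "\<dots> = sqrt t" using K by simp
        also have "\<dots> \<le> ?H (x+t) - ?H x" by (rule Hs) (use t \<tau>' in auto)
        finally show "K * (x + t) - K * x \<le> ?H (x+t) - ?H x" by (simp add: algebra_simps)
      qed
      then show ?thesis by (simp add: lap_right_cmul)
    qed
    have e1: "eventually (\<lambda>s. 1/2 < lap_right (\<lambda>y. y) x \<tau>' s) at_top"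
      by (rule order_tendstoD(1)[OF lap_right_id[OF \<tau>'(1)]]) simp
    have e2: "eventually (\<lambda>s. -1/2 < lap_right ?H x D s - lap_right ?H x \<tau>' s) at_top"
      by (rule order_tendstoD(1)[OF lap_right_delta[OF cHD \<tau>'(1,2)]]) simp
    show "eventually (\<lambda>s. Z \<le> lap_right ?H x D s) at_top"
      using e1 e2
    proof eventually_elim
      case (elim s)
      have "K * (1/2) \<le> K * lap_right (\<lambda>y. y) x \<tau>' s" using elim K by simp
      moreover have "K * (1/2) = \<bar>Z\<bar> + 1" by (simp add: K_def)
      moreover have "Z \<le> \<bar>Z\<bar>" by simp
      ultimately show ?case using le[of s] elim by linarith
    qed
  qed
  then have "((\<lambda>s. ereal (lap_right ?H x D s)) \<longlongrightarrow> \<infinity>) at_top"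
    by (simp add: tendsto_PInfty_eq_at_top)
  then show ?thesis by (rule lim_imp_Liminf[rotated]) simp
qed

lemma dom_at_refl:
  assumes "dom_at F \<Phi> x"
  shows "dom_at (\<lambda>y. - F (- y)) (\<lambda>y. - \<Phi> (- y)) (- x)"
  using assms unfolding dom_at_def
  by (auto simp: abs_minus_commute algebra_simps)

lemma lap_left_sum:
  "lap_left (\<lambda>y. F y + \<Phi> y) x d s = lap_right (\<lambda>y. (- F (- y)) + (- \<Phi> (- y))) (- x) d s"
  unfolding lap_left_refl by (simp add: algebra_simps)

lemma lap_left_refl_lim:
  "(lap_left F x d \<longlongrightarrow> L) at_top \<Longrightarrow> (lap_right (\<lambda>y. - F (- y)) (- x) d \<longlongrightarrow> L) at_top"
  unfolding lap_left_refl .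


lemma major_exists:
  fixes F f :: "real \<Rightarrow> real"
  assumes ab: "a < b" and cF: "continuous_on UNIV F" and C: "countable C"
    and der: "\<forall>x\<in>{a..b} - C. laplace_deriv a b F x (f x)" and e: "\<epsilon> > 0"
  obtains U where "laplace_major f a b U" "U b - U a \<le> F b - F a + \<epsilon>"
proof -
  obtain \<Phi> where cP: "continuous_on UNIV \<Phi>" and mP: "mono \<Phi>" and bd: "\<And>x y. \<Phi> y - \<Phi> x \<le> \<epsilon>"
    and dm: "\<And>c. c \<in> C \<Longrightarrow> dom_at F \<Phi> c"
    using Phi_exists[OF cF C e] by blast
  define U where "U = (\<lambda>y. F y + \<Phi> y)"
  define F' where "F' = (\<lambda>y. - F (- y))"
  define \<Phi>' where "\<Phi>' = (\<lambda>y. - \<Phi> (- y))"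
  have cF': "continuous_on UNIV F'" unfolding F'_def
    by (intro continuous_intros continuous_on_compose2[OF cF]) (auto intro!: continuous_intros)
  have cP': "continuous_on UNIV \<Phi>'" unfolding \<Phi>'_def
    by (intro continuous_intros continuous_on_compose2[OF cP]) (auto intro!: continuous_intros)
  have mP': "mono \<Phi>'" unfolding \<Phi>'_def using mP by (auto simp: mono_def)
  have R: "ereal (f x) \<le> Liminf at_top (\<lambda>s. ereal (lap_right U x (b - x) s))" if x: "x \<in> {a..<b}" for x
  proof (cases "x \<in> C")
    case True
    show ?thesis unfolding U_def by (subst right_dom[OF cF cP dm[OF True]]) (use x in auto)
  next
    case False
    then have "laplace_deriv a b F x (f x)" using der x by auto
    then obtain d where d: "0 < d" "x + d \<le> b" "(lap_right F x d \<longlongrightarrow> f x) at_top"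
      unfolding laplace_deriv_def using x by auto
    show ?thesis unfolding U_def by (rule right_regular[OF cF cP mP d(1) _ d(3)]) (use d in auto)
  qed
  have L: "ereal (f x) \<le> Liminf at_top (\<lambda>s. ereal (lap_left U x (x - a) s))" if x: "x \<in> {a<..b}" for x
  proof -
    have eq: "lap_left U x (x - a) s = lap_right (\<lambda>y. F' y + \<Phi>' y) (- x) (x - a) s" for s
      unfolding U_def F'_def \<Phi>'_def by (rule lap_left_sum)
    show ?thesis unfolding eq
    proof (cases "x \<in> C")
      case True
      show "ereal (f x) \<le> Liminf at_top (\<lambda>s. ereal (lap_right (\<lambda>y. F' y + \<Phi>' y) (- x) (x - a) s))"
        using dom_at_refl[OF dm[OF True]]
        by (subst right_dom[OF cF' cP']) (use x in \<open>auto simp: F'_def \<Phi>'_def\<close>)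
    next
      case False
      then have "laplace_deriv a b F x (f x)" using der x by auto
      then obtain d where d: "0 < d" "a \<le> x - d" "(lap_left F x d \<longlongrightarrow> f x) at_top"
        unfolding laplace_deriv_def using x by auto
      have lim: "(lap_right F' (- x) d \<longlongrightarrow> f x) at_top"
        unfolding F'_def by (rule lap_left_refl_lim[OF d(3)])
      show "ereal (f x) \<le> Liminf at_top (\<lambda>s. ereal (lap_right (\<lambda>y. F' y + \<Phi>' y) (- x) (x - a) s))"
        by (rule right_regular[OF cF' cP' mP' d(1) _ lim]) (use d in auto)
    qed
  qed
  show ?thesis
  proof (rule that[of U])
    show "U b - U a \<le> F b - F a + \<epsilon>" using bd[of b a] by (simp add: U_def)
    have lo: "ereal (f x) \<le> lower_LD a b U x" if x: "x \<in> {a..b}" for x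
      unfolding lower_LD_def using R[of x] L[of x] x by auto
    show "laplace_major f a b U"
      unfolding laplace_major_def
    proof (intro conjI ballI)
      show "continuous_on {a..b} U" unfolding U_def
        by (intro continuous_on_subset[OF continuous_on_add[OF cF cP]]) auto
      fix x assume x: "x \<in> {a..b}"
      show "ereal (f x) \<le> lower_LD a b U x" by (rule lo[OF x])
      show "- \<infinity> < lower_LD a b U x" using lo[OF x] by (metis MInfty_neq_ereal(1) ereal_infty_less_eq(2) not_le_imp_less)
    qed
  qed
qed


lemma lap_left_neg: "lap_left (\<lambda>y. - G y) x d s = - lap_left G x d s"
  unfolding lap_left_refl by (simp add: lap_right_neg)

lemma ereal_max_neg: "max (- p) (- q) = - min p (q::ereal)"
  by (cases "p \<le> q") (auto simp: min_def max_def)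

lemma upper_neg: "upper_LD a b (\<lambda>y. - U y) x = - lower_LD a b U x"
proof -
  have "upper_LD a b (\<lambda>y. - U y) x =
     max (- (if x < b then Liminf at_top (\<lambda>s. ereal (lap_right U x (b - x) s)) else \<infinity>))
         (- (if a < x then Liminf at_top (\<lambda>s. ereal (lap_left U x (x - a) s)) else \<infinity>))"
    unfolding upper_LD_def lap_right_neg lap_left_neg
    by (simp add: ereal_Limsup_uminus[symmetric])
  then show ?thesis unfolding lower_LD_def ereal_max_neg .
qed

lemma neg_major_minor:
  assumes "laplace_major (\<lambda>x. - f x) a b U"
  shows "laplace_minor f a b (\<lambda>x. - U x)"
  using assms unfolding laplace_major_def laplace_minor_def upper_neg
proof (intro conjI ballI)
  assume A: "continuous_on {a..b} U \<and> (\<forall>x\<in>{a..b}. ereal (- f x) \<le> lower_LD a b U x \<and> - \<infinity> < lower_LD a b U x)"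
  then show "continuous_on {a..b} (\<lambda>x. - U x)" by (auto intro: continuous_intros)
  fix x assume x: "x \<in> {a..b}"
  from A x have 1: "ereal (- f x) \<le> lower_LD a b U x" and 2: "- \<infinity> < lower_LD a b U x" by auto
  show "- lower_LD a b U x \<le> ereal (f x)" using 1 by (simp add: ereal_uminus_le_reorder)
  show "- lower_LD a b U x < \<infinity>" using 2 by (cases "lower_LD a b U x") auto
qed

lemma deriv_neg:
  assumes "laplace_deriv a b F x L"
  shows "laplace_deriv a b (\<lambda>y. - F y) x (- L)"
  using assms unfolding laplace_deriv_def lap_right_neg lap_left_neg
  by (auto intro: tendsto_minus)

lemma ereal_sandwich_sup:
  assumes "S \<le> ereal X" "\<And>e. e > 0 \<Longrightarrow> ereal (X - e) \<le> S"
  shows "S = ereal X"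
proof (cases S)
  case (real r)
  have "r \<le> X" using assms(1) real by simp
  moreover have "X \<le> r"
  proof (rule ccontr)
    assume "\<not> X \<le> r"
    then have "ereal (X - (X - r)/2) \<le> ereal r" using assms(2)[of "(X - r)/2"] real by simp
    with \<open>\<not> X \<le> r\<close> show False by (simp add: field_simps)
  qed
  ultimately show ?thesis using real by simp
next
  case PInf then show ?thesis using assms(1) by simp
next
  case MInf then show ?thesis using assms(2)[of 1] by simp
qed

lemma ereal_sandwich_inf:
  assumes "ereal X \<le> S" "\<And>e. e > 0 \<Longrightarrow> S \<le> ereal (X + e)"
  shows "S = ereal X"
proof (cases S)
  case (real r)
  have "X \<le> r" using assms(1) real by simp
  moreover have "r \<le> X"
  proof (rule ccontr)
    assume "\<not> r \<le> X"
    then have "ereal r \<le> ereal (X + (r - X)/2)" using assms(2)[of "(r - X)/2"] real by simp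
    with \<open>\<not> r \<le> X\<close> show False by (simp add: field_simps)
  qed
  ultimately show ?thesis using real by simp
next
  case PInf then show ?thesis using assms(2)[of 1] by simp
next
  case MInf then show ?thesis using assms(1) by simp
qed

lemma has_int_main:
  fixes F f :: "real \<Rightarrow> real"
  assumes ab: "a < b" and cF: "continuous_on UNIV F" and C: "countable C"
    and der: "\<forall>x\<in>{a..b} - C. laplace_deriv a b F x (f x)"
  shows "laplace_has_integral f a b (F b - F a)"
proof -
  have maj: "\<exists>U. laplace_major f a b U \<and> U b - U a \<le> F b - F a + e" if "e > 0" for e
    using major_exists[OF ab cF C der that] by blast
  have min: "\<exists>V. laplace_minor f a b V \<and> F b - F a - e \<le> V b - V a" if e: "e > 0" for e
  proof -
    have cF': "continuous_on UNIV (\<lambda>y. - F y)" by (intro continuous_intros cF)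
    have der': "\<forall>x\<in>{a..b} - C. laplace_deriv a b (\<lambda>y. - F y) x (- f x)"
      using der by (auto intro: deriv_neg)
    obtain U where U: "laplace_major (\<lambda>x. - f x) a b U" "U b - U a \<le> - F b - - F a + e"
      using major_exists[OF ab cF' C der' e] by blast
    show ?thesis
      by (intro exI[of _ "\<lambda>x. - U x"] conjI neg_major_minor U(1)) (use U(2) in linarith)
  qed
  have Vle: "V b - V a \<le> F b - F a" if V: "laplace_minor f a b V" for V
  proof (rule field_le_epsilon)
    fix e :: real assume "e > 0"
    then obtain U where "laplace_major f a b U" "U b - U a \<le> F b - F a + e" using maj by blast
    with major_minor[OF ab _ V] show "V b - V a \<le> F b - F a + e" by force
  qed
  have Uge: "F b - F a \<le> U b - U a" if U: "laplace_major f a b U" for U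
  proof (rule field_le_epsilon)
    fix e :: real assume "e > 0"
    obtain V where "laplace_minor f a b V" "F b - F a - e \<le> V b - V a" using min \<open>e > 0\<close> by blast
    with major_minor[OF ab U] show "F b - F a \<le> U b - U a + e" by force
  qed
  show ?thesis unfolding laplace_has_integral_def
  proof
    show "(SUP V\<in>{V. laplace_minor f a b V}. ereal (V b - V a)) = ereal (F b - F a)"
    proof (rule ereal_sandwich_sup)
      show "(SUP V\<in>{V. laplace_minor f a b V}. ereal (V b - V a)) \<le> ereal (F b - F a)"
        by (rule SUP_least) (auto intro: Vle)
      fix e :: real assume "e > 0"
      then obtain V where V: "laplace_minor f a b V" "F b - F a - e \<le> V b - V a" using min by blast
      show "ereal (F b - F a - e) \<le> (SUP V\<in>{V. laplace_minor f a b V}. ereal (V b - V a))"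
        by (rule SUP_upper2[of V]) (use V in auto)
    qed
    show "(INF U\<in>{U. laplace_major f a b U}. ereal (U b - U a)) = ereal (F b - F a)"
    proof (rule ereal_sandwich_inf)
      show "ereal (F b - F a) \<le> (INF U\<in>{U. laplace_major f a b U}. ereal (U b - U a))"
        by (rule INF_greatest) (auto intro: Uge)
      fix e :: real assume "e > 0"
      then obtain U where U: "laplace_major f a b U" "U b - U a \<le> F b - F a + e" using maj by blast
      show "(INF U\<in>{U. laplace_major f a b U}. ereal (U b - U a)) \<le> ereal (F b - F a + e)"
        by (rule INF_lower2[of U]) (use U in auto)
    qed
  qed
qed


lemma lap_left_cong:
  assumes "\<And>y. y \<in> {x-d..x} \<Longrightarrow> G y = H y"  "0 \<le> d"
  shows "lap_left G x d s = lap_left H x d s"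
  unfolding lap_left_def using assms
  by (intro arg_cong2[where f="(*)"] refl integral_cong) auto

lemma deriv_restrict:
  fixes F :: "real \<Rightarrow> real"
  assumes cF: "continuous_on UNIV F" and eq: "\<And>y. y \<in> {a..b} \<Longrightarrow> G y = F y"
    and e: "a < e" "e \<le> b" and x: "x \<in> {a..e}" and der: "laplace_deriv a b G x L"
  shows "laplace_deriv a e F x L"
  unfolding laplace_deriv_def
proof (intro conjI impI)
  assume xe: "x < e"
  then obtain d0 where d0: "0 < d0" "x + d0 \<le> b" "(lap_right G x d0 \<longlongrightarrow> L) at_top"
    using der e unfolding laplace_deriv_def by auto
  have "lap_right G x d0 = lap_right F x d0"
    by (rule ext, rule lap_right_cong) (use eq x d0 in auto)
  with d0(3) have l0: "(lap_right F x d0 \<longlongrightarrow> L) at_top" by simp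
  define d where "d = min d0 (e - x)"
  have d: "0 < d" "d \<le> d0" "x + d \<le> e" using d0 xe by (auto simp: d_def)
  have cF': "continuous_on {x..x+d0} F" by (rule continuous_on_subset[OF cF]) auto
  have "((\<lambda>s. lap_right F x d0 s - (lap_right F x d0 s - lap_right F x d s)) \<longlongrightarrow> L - 0) at_top"
    by (intro tendsto_diff l0 lap_right_delta[OF cF' d(1,2)])
  then have "(lap_right F x d \<longlongrightarrow> L) at_top" by simp
  then show "\<exists>d. 0 < d \<and> x + d \<le> e \<and> (lap_right F x d \<longlongrightarrow> L) at_top" using d by blast
next
  assume ax: "a < x"
  then obtain d0 where d0: "0 < d0" "a \<le> x - d0" "(lap_left G x d0 \<longlongrightarrow> L) at_top"
    using der unfolding laplace_deriv_def by auto
  have "lap_left G x d0 = lap_left F x d0"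
    by (rule ext, rule lap_left_cong) (use eq x d0 e in auto)
  with d0(3) have "(lap_left F x d0 \<longlongrightarrow> L) at_top" by simp
  then show "\<exists>d. 0 < d \<and> a \<le> x - d \<and> (lap_left F x d \<longlongrightarrow> L) at_top" using d0 by blast
qed

theorem theorem5p3:
  fixes F f :: "real \<Rightarrow> real" and a b :: real and C :: "real set"
  assumes "a < b"
    and "continuous_on {a..b} F"
    and "countable C"
    and "\<forall>x\<in>{a..b} - C. laplace_deriv a b F x (f x)"
  shows "laplace_integrable f a b \<and>
         (\<forall>x\<in>{a<..b}. laplace_has_integral f a x (F x - F a))"
proof -
  define F' where "F' = (\<lambda>y. F (max a (min b y)))"
  have cF': "continuous_on UNIV F'" unfolding F'_def
    by (rule continuous_on_compose2[OF assms(2)]) (use assms(1) in \<open>auto intro!: continuous_intros\<close>)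
  have eq: "F y = F' y" if "y \<in> {a..b}" for y using that by (simp add: F'_def)
  have main: "laplace_has_integral f a e (F e - F a)" if e: "e \<in> {a<..b}" for e
  proof -
    have der': "\<forall>x\<in>{a..e} - C. laplace_deriv a e F' x (f x)"
    proof
      fix x assume x: "x \<in> {a..e} - C"
      then have "laplace_deriv a b F x (f x)" using assms(4) e by auto
      show "laplace_deriv a e F' x (f x)"
        by (rule deriv_restrict[OF cF' eq _ _ _ \<open>laplace_deriv a b F x (f x)\<close>]) (use e x in auto)
    qed
    have "laplace_has_integral f a e (F' e - F' a)"
      by (rule has_int_main[OF _ cF' assms(3) der']) (use e in auto)
    moreover have "F' e - F' a = F e - F a" using e assms(1) by (simp add: eq)
    ultimately show ?thesis by simp
  qed
  show ?thesis
    using main[of b] assms(1) unfolding laplace_integrable_def by (auto intro: main)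
qed

end
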